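(* Let $\mathcal{Y}$ be a set, fix $\alpha\in(0,1)$ and $b\in(0,\infty]$ (possibly $+\infty$). Let $L_t:2^{\mathcal{Y}}\times\mathcal{Y}\to[0,1]$, $t\in\mathbb{N}$, be loss functions with $L_t(\mathcal{Y},y)=0$ and $L_t(\emptyset,y)=1$ for all $y\in\mathcal{Y}$. Let $y_t\in\mathcal{Y}$ be arbitrary and let $\mathcal{C}_t\subseteq\mathcal{Y}$ be prediction sets determined by $q_t$ such that $\mathcal{C}_t=\emptyset$ whenever $q_t\le -b$ and $\mathcal{C}_t=\mathcal{Y}$ whenever $q_t\ge b$. Let $h:\mathbb{N}\to[0,\infty)$ be admissible (nonnegative, nondecreasing, sublinear: $h(t)/t\to0$), and let $r_t:\mathbb{R}\to[-\infty,\infty]$ satisfy, for some constant $c>0$ and all $t,x$, $$x \geq c\, h(t) \implies r_t(x) \geq b, \qquad x \leq -c\, h(t) \implies r_t(x) \leq -b.$$ With $q_1$ arbitrary, consider the iteration $$q_{t+1} = r_t\Big(\sum_{i=1}^t\big(L_i(\mathcal{C}_i,y_i)-\alpha\big)\Big).$$ Then for all $T\ge1$, $$\Bigg|\frac1T\sum_{t=1}^T\big(L_t(\mathcal{C}_t,y_t)-\alpha\big)\Bigg| \le \frac{c\,h(T)+1}{T}.$$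
   Context: Deterministic online conformal risk control setting: no probabilistic assumptions on the sequence $y_t$. *)

theory Defs
  imports "HOL-Analysis.Analysis"
begin

definition admissible :: "(nat \<Rightarrow> real) \<Rightarrow> bool" where
  "admissible h \<longleftrightarrow> (\<forall>t. h t \<ge> 0) \<and> mono h \<and> ((\<lambda>t. h t / real t) \<longlonglongrightarrow> 0)"

end

theory Submission
  imports Defs
begin

theorem proposition3:
  fixes \<alpha> :: real and b :: ereal and c :: real
    and L :: "nat \<Rightarrow> 'y set \<Rightarrow> 'y \<Rightarrow> real"
    and y :: "nat \<Rightarrow> 'y"
    and Cset :: "nat \<Rightarrow> ereal \<Rightarrow> 'y set"
    and h :: "nat \<Rightarrow> real"
    and r :: "nat \<Rightarrow> real \<Rightarrow> ereal"
    and q :: "nat \<Rightarrow> ereal"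
    and T :: nat
  assumes alpha: "0 < \<alpha>" "\<alpha> < 1"
    and b_pos: "0 < b"
    and L_range: "\<And>t S z. t \<ge> 1 \<Longrightarrow> 0 \<le> L t S z \<and> L t S z \<le> 1"
    and L_UNIV: "\<And>t z. t \<ge> 1 \<Longrightarrow> L t UNIV z = 0"
    and L_empty: "\<And>t z. t \<ge> 1 \<Longrightarrow> L t {} z = 1"
    and C_low: "\<And>t x. t \<ge> 1 \<Longrightarrow> x \<le> - b \<Longrightarrow> Cset t x = {}"
    and C_high: "\<And>t x. t \<ge> 1 \<Longrightarrow> x \<ge> b \<Longrightarrow> Cset t x = UNIV"
    and h_adm: "admissible h"
    and c_pos: "c > 0"
    and r_high: "\<And>t x. t \<ge> 1 \<Longrightarrow> x \<ge> c * h t \<Longrightarrow> r t x \<ge> b"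
    and r_low: "\<And>t x. t \<ge> 1 \<Longrightarrow> x \<le> - c * h t \<Longrightarrow> r t x \<le> - b"
    and q_rec: "\<And>t. t \<ge> 1 \<Longrightarrow>
        q (Suc t) = r t (\<Sum>i=1..t. L i (Cset i (q i)) (y i) - \<alpha>)"
    and T_pos: "T \<ge> 1"
  shows "\<bar>(1 / real T) * (\<Sum>t=1..T. L t (Cset t (q t)) (y t) - \<alpha>)\<bar> \<le> (c * h T + 1) / real T"
proof -
  define S where "S n = (\<Sum>i=1..n. L i (Cset i (q i)) (y i) - \<alpha>)" for n
  have h0: "\<And>t. h t \<ge> 0" and hm: "mono h" using h_adm unfolding admissible_def by auto
  have Suc_S: "S (Suc n) = S n + (L (Suc n) (Cset (Suc n) (q (Suc n))) (y (Suc n)) - \<alpha>)" for n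
    unfolding S_def by simp
  have key: "\<bar>S (Suc n)\<bar> \<le> c * h (Suc n) + 1" for n
  proof (induction n)
    case 0
    have "\<bar>S (Suc 0)\<bar> \<le> 1" unfolding S_def using L_range[of 1] alpha by (simp add: abs_le_iff) (smt (verit) L_range le_numeral_extra(4))
    moreover have "c * h 1 \<ge> 0" using c_pos h0 by simp
    ultimately show ?case by simp
  next
    case (Suc n)
    define m where "m = Suc n"
    have m1: "m \<ge> 1" unfolding m_def by simp
    have IH: "\<bar>S m\<bar> \<le> c * h m + 1" using Suc m_def by simp
    have hle: "c * h m \<le> c * h (Suc m)" using hm c_pos by (simp add: monoD)
    have hpos: "c * h m \<ge> 0" using c_pos h0 by simp
    have qS: "q (Suc m) = r m (S m)" using q_rec[OF m1] S_def by simp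
    define l where "l = L (Suc m) (Cset (Suc m) (q (Suc m))) (y (Suc m))"
    have lr: "0 \<le> l" "l \<le> 1" using L_range[of "Suc m"] l_def by auto
    have SS: "S (Suc m) = S m + (l - \<alpha>)" using Suc_S l_def by simp
    have "\<bar>S (Suc m)\<bar> \<le> c * h (Suc m) + 1"
    proof (cases "S m \<ge> c * h m")
      case True
      have "q (Suc m) \<ge> b" using r_high[OF m1 True] qS by simp
      hence "Cset (Suc m) (q (Suc m)) = UNIV" using C_high by simp
      hence "l = 0" using L_UNIV l_def by simp
      thus ?thesis using SS IH hle hpos True alpha by (simp add: abs_le_iff)
    next
      case F1: False
      show ?thesis
      proof (cases "S m \<le> - c * h m")
        case True
        have "q (Suc m) \<le> - b" using r_low[OF m1 True] qS by simp
        hence "Cset (Suc m) (q (Suc m)) = {}" using C_low by simp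
        hence "l = 1" using L_empty l_def by simp
        thus ?thesis using SS IH hle hpos True alpha by (simp add: abs_le_iff)
      next
        case False
        thus ?thesis using F1 SS hle lr alpha by (simp add: abs_le_iff)
      qed
    qed
    thus ?case by (simp add: m_def)
  qed
  obtain n where Tn: "T = Suc n" using T_pos by (cases T) auto
  have "\<bar>S T\<bar> \<le> c * h T + 1" using key Tn by simp
  moreover have "real T > 0" using T_pos by simp
  ultimately show ?thesis unfolding S_def[symmetric]
    by (simp add: abs_mult divide_right_mono)
qed

end
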